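(* Let $n\ge 3$. The reciprocal status Hosoya polynomial of the power graph $P(G(n))$ of the gyrogroup $G(n)$ (defined in the context) is $$H_{rs}(P(G(n)),x)=(2^{n-1}-1)x^{\frac{2^{n+2}-2^{n-1}-4}{2}}+2^{n-1}x^{2^n+2^{n-1}-1}+\binom{2^{n-1}-1}{2}x^{2^n+2^{n-1}-2}.$$
   Context: Let $n\ge 3$ be an integer and $m=2^{n-1}$. Let $P(n)=\{0,1,\dots,m-1\}$, $H(n)=\{m,m+1,\dots,2^n-1\}$ and $G(n)=P(n)\cup H(n)$. For $i,j\in G(n)$ let $t,s,k\in P(n)$ be the residues modulo $m$ (taken in $\{0,\dots,m-1\}$) of $i+j$, $i+(\frac m2-1)j$ and $(\frac m2+1)i+(\frac m2-1)j$, respectively, and define $i\oplus j=t$ if $i,j\in P(n)$; $i\oplus j=t+m$ if $i\in P(n),j\in H(n)$; $i\oplus j=s+m$ if $i\in H(n),j\in P(n)$; $i\oplus j=k$ if $i,j\in H(n)$. Then $(G(n),\oplus)$ is a gyrogroup with identity $e=0$. Powers are defined by $a^1=a$, $a^{k+1}=a^k\oplus a$. The power graph $P(G(n))$ is the simple undirected graph with vertex set $G(n)$ in which distinct vertices $u,v$ are adjacent if and only if $u^k=v$ or $v^k=u$ for some positive integer $k$. For a connected graph $G$ with distance $d$, the reciprocal status of a vertex $v$ is $rs(v)=\sum_{u\in V(G),u\ne v}\frac{1}{d(u,v)}$, and the reciprocal status Hosoya polynomial is $H_{rs}(G,x)=\sum_{uv\in E(G)}x^{rs(u)+rs(v)}$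 (sum over edges). *)

theory Defs
  imports Complex_Main
begin

definition gy_op :: "nat \<Rightarrow> nat \<Rightarrow> nat \<Rightarrow> nat" where
  "gy_op n i j = (let m = 2^(n-1);
      t = (i + j) mod m;
      s = (i + (m div 2 - 1) * j) mod m;
      k = ((m div 2 + 1) * i + (m div 2 - 1) * j) mod m
    in if i < m \<and> j < m then t
       else if i < m \<and> \<not> j < m then t + m
       else if \<not> i < m \<and> j < m then s + m
       else k)"

text \<open>Powers: a^1 = a, a^(k+1) = a^k (+) a. The value at 0 is irrelevant (only k >= 1 used).\<close>
fun gy_pow :: "nat \<Rightarrow> nat \<Rightarrow> nat \<Rightarrow> nat" where
  "gy_pow n a 0 = 0"
| "gy_pow n a (Suc k) = (if k = 0 then a else gy_op n (gy_pow n a k) a)"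

definition gy_carrier :: "nat \<Rightarrow> nat set" where
  "gy_carrier n = {0..<2^n}"

definition pg_adj :: "nat \<Rightarrow> nat \<Rightarrow> nat \<Rightarrow> bool" where
  "pg_adj n u v \<longleftrightarrow> u \<in> gy_carrier n \<and> v \<in> gy_carrier n \<and> u \<noteq> v \<and>
     (\<exists>k\<ge>1. gy_pow n u k = v \<or> gy_pow n v k = u)"

definition pg_edges :: "nat \<Rightarrow> (nat \<times> nat) set" where
  "pg_edges n = {(u, v). pg_adj n u v}"

definition pg_dist :: "nat \<Rightarrow> nat \<Rightarrow> nat \<Rightarrow> nat" where
  "pg_dist n u v = (LEAST k. (u, v) \<in> pg_edges n ^^ k)"

definition recip_status :: "nat \<Rightarrow> nat \<Rightarrow> real" where
  "recip_status n v = (\<Sum>u \<in> gy_carrier n - {v}. 1 / real (pg_dist n u v))"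

text \<open>Reciprocal status Hosoya polynomial, evaluated at x > 0; each undirected edge
  {u,v} is counted once (as the pair with u < v).\<close>
definition H_rs :: "nat \<Rightarrow> real \<Rightarrow> real" where
  "H_rs n x = (\<Sum>(u, v) \<in> {(u, v). pg_adj n u v \<and> u < v}.
                 x powr (recip_status n u + recip_status n v))"

end

theory Submission
  imports Defs "HOL-Computational_Algebra.Primes"
begin

lemma op_PP: "m = 2^(n-1) \<Longrightarrow> i < m \<Longrightarrow> j < m \<Longrightarrow> gy_op n i j = (i+j) mod m"
  by (simp add: gy_op_def Let_def)
lemma op_PH: "m = 2^(n-1) \<Longrightarrow> i < m \<Longrightarrow> \<not> j < m \<Longrightarrow> gy_op n i j = (i+j) mod m + m"
  by (simp add: gy_op_def Let_def)
lemma op_HH: "m = 2^(n-1) \<Longrightarrow> \<not> i < m \<Longrightarrow> \<not> j < m \<Longrightarrow>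
   gy_op n i j = ((m div 2 + 1)*i + (m div 2 - 1)*j) mod m"
  by (simp add: gy_op_def Let_def)

lemma pow_P:
  assumes m: "m = 2^(n-1)" and a: "a < m"
  shows "k \<ge> 1 \<Longrightarrow> gy_pow n a k = (k*a) mod m"
proof (induction k)
  case 0 then show ?case by simp
next
  case (Suc k)
  show ?case
  proof (cases "k = 0")
    case True then show ?thesis using a by simp
  next
    case False
    then have "gy_pow n a k = (k*a) mod m" using Suc by simp
    moreover have "(k*a) mod m < m" using a by simp
    moreover have "(k*a mod m + a) mod m = (k*a + a) mod m" by (rule mod_add_left_eq)
    ultimately show ?thesis using False op_PP[OF m _ a]
      by (simp add: add.commute)
  qed
qed

lemma pow_H:
  assumes m: "m = 2^(n-1)" and n: "n \<ge> 3" and a1: "m \<le> a" and a2: "a < 2*m"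
  shows "k \<ge> 1 \<Longrightarrow> gy_pow n a k = (if odd k then a else 0)"
proof (induction k)
  case 0 then show ?case by simp
next
  case (Suc k)
  have m4: "m \<ge> 4"
  proof -
    have "(2::nat)^2 \<le> 2^(n-1)" using n by (intro power_increasing) auto
    then show ?thesis using m by simp
  qed
  have ev: "even m" using m n by (simp add: m)
  have sq: "gy_op n a a = 0"
  proof -
    have e: "(m div 2 + 1) + (m div 2 - 1) = m" using m4 ev by auto
    have "(m div 2 + 1)*a + (m div 2 - 1)*a = m*a"
      by (metis e add_mult_distrib)
    then show ?thesis using op_HH[OF m] a1 by simp
  qed
  have z: "gy_op n 0 a = a"
  proof -
    have "a mod m = a - m" using a1 a2 by (simp add: le_mod_geq)
    then show ?thesis using op_PH[OF m] a1 m4 by simp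
  qed
  show ?case
  proof (cases "k = 0")
    case True then show ?thesis by simp
  next
    case False
    then have ih: "gy_pow n a k = (if odd k then a else 0)" using Suc by simp
    show ?thesis using False ih sq z by auto
  qed
qed

lemma gen_mult:
  fixes u v m :: nat
  assumes "0 < m" "gcd u m dvd v"
  shows "\<exists>k\<ge>1. (k*u) mod m = v mod m"
proof (cases "u = 0")
  case True
  then have "m dvd v" using assms by simp
  then show ?thesis using True by (intro exI[of _ 1]) auto
next
  case False
  obtain x y where xy: "u*x = m*y + gcd u m" using bezout_nat[OF False] by blast
  obtain c where c: "v = gcd u m * c" using assms(2) by blast
  have "(x*c + m)*u = v + m*(c*y + u)" using xy c
    by (simp add: algebra_simps)
  then have "((x*c + m)*u) mod m = v mod m"
    by simp
  moreover have "x*c + m \<ge> 1" using assms by simp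
  ultimately show ?thesis by blast
qed

lemma cyc:
  fixes u v j :: nat
  assumes m: "m = 2^j" and u: "u < m" and v: "v < m"
  shows "\<exists>k\<ge>1. (k*u) mod m = v \<or> (k*v) mod m = u"
proof -
  have p2: "prime (2::nat)" by simp
  obtain a where a: "gcd u m = 2^a" using divides_primepow_nat[OF p2, of "gcd u m" j] m by auto
  obtain b where b: "gcd v m = 2^b" using divides_primepow_nat[OF p2, of "gcd v m" j] m by auto
  have m0: "0 < m" using m by simp
  show ?thesis
  proof (cases "a \<le> b")
    case True
    then have "gcd u m dvd gcd v m" using a b by (simp add: le_imp_power_dvd)
    then have "gcd u m dvd v" using dvd_trans gcd_dvd1 by blast
    then obtain k where "k \<ge> 1" "(k*u) mod m = v mod m" using gen_mult[OF m0] by blast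
    then show ?thesis using v by auto
  next
    case False
    then have "gcd v m dvd gcd u m" using a b by (simp add: le_imp_power_dvd)
    then have "gcd v m dvd u" using dvd_trans gcd_dvd1 by blast
    then obtain k where "k \<ge> 1" "(k*v) mod m = u mod m" using gen_mult[OF m0] by blast
    then show ?thesis using u by auto
  qed
qed


lemma two_m: "n \<ge> 3 \<Longrightarrow> (2::nat)^n = 2 * 2^(n-1)"
  by (cases n) auto

lemma carrier_eq: "n \<ge> 3 \<Longrightarrow> m = 2^(n-1) \<Longrightarrow> gy_carrier n = {0..<2*m}"
  using two_m by (simp add: gy_carrier_def)

lemma m_ge4: "n \<ge> 3 \<Longrightarrow> m = 2^(n-1) \<Longrightarrow> (m::nat) \<ge> 4"
proof -
  assume n: "n \<ge> 3" and m: "m = 2^(n-1)"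
  have "(2::nat)^2 \<le> 2^(n-1)" using n by (intro power_increasing) auto
  then show ?thesis using m by simp
qed

lemma adj_iff:
  assumes n: "n \<ge> 3" and m: "m = 2^(n-1)"
  shows "pg_adj n u v \<longleftrightarrow> u < 2*m \<and> v < 2*m \<and> u \<noteq> v \<and>
     ((u < m \<and> v < m) \<or> (u = 0 \<and> m \<le> v) \<or> (v = 0 \<and> m \<le> u))"
proof -
  have m4: "m \<ge> 4" using m_ge4[OF n m] .
  have C: "gy_carrier n = {0..<2*m}" using carrier_eq[OF n m] .
  have PH: "\<not> (\<exists>k\<ge>1. gy_pow n a k = b)" if "a < m" "m \<le> b" for a b
  proof
    assume "\<exists>k\<ge>1. gy_pow n a k = b"
    then obtain k where "k \<ge> 1" "gy_pow n a k = b" by blast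
    then have "b = k*a mod m" using pow_P[OF m that(1)] by simp
    moreover have "k*a mod m < m" using m4 by simp
    ultimately show False using that by simp
  qed
  have HP: "\<not> (\<exists>k\<ge>1. gy_pow n b k = a)" if "a < m" "m \<le> b" "b < 2*m" "a \<noteq> 0" for a b
    using pow_H[OF m n that(2,3)] that by auto
  have HH: "\<not> (\<exists>k\<ge>1. gy_pow n a k = b)" if "m \<le> a" "a < 2*m" "m \<le> b" "a \<noteq> b" for a b
    using pow_H[OF m n that(1,2)] that m4 by auto
  have H0: "gy_pow n b 2 = 0" if "m \<le> b" "b < 2*m" for b
    using pow_H[OF m n that] by simp
  show ?thesis
  proof
    assume A: "pg_adj n u v"
    then have uv: "u < 2*m" "v < 2*m" "u \<noteq> v" and ex: "\<exists>k\<ge>1. gy_pow n u k = v \<or> gy_pow n v k = u"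
      using C by (auto simp: pg_adj_def)
    show "u < 2*m \<and> v < 2*m \<and> u \<noteq> v \<and>
     ((u < m \<and> v < m) \<or> (u = 0 \<and> m \<le> v) \<or> (v = 0 \<and> m \<le> u))"
    proof (rule ccontr)
      assume B: "\<not> ?thesis"
      show False
      proof (cases "u < m")
        case True
        then have "m \<le> v" "u \<noteq> 0" using B uv by auto
        then show False using PH[OF True] HP[OF True] uv ex by blast
      next
        case False
        then have u: "m \<le> u" by simp
        show False
        proof (cases "v < m")
          case True
          then have "v \<noteq> 0" using B uv u by auto
          then show False using PH[OF True u] HP[OF True u] uv ex by blast
        next
          case False
          then have v: "m \<le> v" by simp
          show False using HH[OF u uv(1) v uv(3)] HH[OF v uv(2) u uv(3)[symmetric]] ex by blast
        qed
      qed
    qed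
  next
    assume B: "u < 2*m \<and> v < 2*m \<and> u \<noteq> v \<and>
     ((u < m \<and> v < m) \<or> (u = 0 \<and> m \<le> v) \<or> (v = 0 \<and> m \<le> u))"
    have "\<exists>k\<ge>1. gy_pow n u k = v \<or> gy_pow n v k = u"
    proof -
      consider "u < m" "v < m" | "u = 0" "m \<le> v" | "v = 0" "m \<le> u" using B by blast
      then show ?thesis
      proof cases
        case 1
        obtain k where "k \<ge> 1" "(k*u) mod m = v \<or> (k*v) mod m = u"
          using cyc[OF m 1] by blast
        then show ?thesis using pow_P[OF m 1(1)] pow_P[OF m 1(2)] by metis
      next
        case 2
        then show ?thesis using H0[of v] B by (intro exI[of _ 2]) auto
      next
        case 3
        then show ?thesis using H0[of u] B by (intro exI[of _ 2]) auto
      qed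
    qed
    then show "pg_adj n u v" using B C by (auto simp: pg_adj_def)
  qed
qed


lemma dist_val:
  assumes n: "n \<ge> 3" and m: "m = 2^(n-1)" and uv: "u < 2*m" "v < 2*m" "u \<noteq> v"
  shows "1 / real (pg_dist n u v) = (if pg_adj n u v then 1 else 1/2)"
proof (cases "pg_adj n u v")
  case True
  have "pg_dist n u v = 1" unfolding pg_dist_def
  proof (rule Least_equality)
    show "(u, v) \<in> pg_edges n ^^ 1" using True by (simp add: pg_edges_def)
    fix y assume "(u, v) \<in> pg_edges n ^^ y"
    then show "1 \<le> y" using uv(3) by (cases y) auto
  qed
  then show ?thesis using True by simp
next
  case False
  have m4: "m \<ge> 4" using m_ge4[OF n m] .
  have u0: "u \<noteq> 0"
  proof
    assume "u = 0"
    then have "pg_adj n u v" using adj_iff[OF n m, of u v] uv by auto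
    then show False using False by simp
  qed
  have v0: "v \<noteq> 0"
  proof
    assume "v = 0"
    then have "pg_adj n u v" using adj_iff[OF n m, of u v] uv by auto
    then show False using False by simp
  qed
  have a1: "pg_adj n u 0" using adj_iff[OF n m, of u 0] u0 uv m4 by auto
  have a2: "pg_adj n 0 v" using adj_iff[OF n m, of 0 v] v0 uv m4 by auto
  have "pg_dist n u v = 2" unfolding pg_dist_def
  proof (rule Least_equality)
    have "(u, 0) \<in> pg_edges n ^^ 1" "(0, v) \<in> pg_edges n" using a1 a2 by (auto simp: pg_edges_def)
    then have "(u, v) \<in> pg_edges n ^^ Suc 1" by (rule relpow_Suc_I)
    then show "(u, v) \<in> pg_edges n ^^ 2" by (simp only: Suc_1)
    fix y assume y: "(u, v) \<in> pg_edges n ^^ y"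
    show "2 \<le> y"
    proof (rule ccontr)
      assume "\<not> 2 \<le> y"
      then have "y = 0 \<or> y = 1" by auto
      then show False using y uv(3) False by (auto simp: pg_edges_def)
    qed
  qed
  then show ?thesis using False by simp
qed


lemma rs_alt:
  assumes n: "n \<ge> 3" and m: "m = 2^(n-1)" and v: "v < 2*m"
  shows "recip_status n v = (\<Sum>u \<in> {0..<2*m} - {v}. if pg_adj n u v then 1 else 1/2)"
  unfolding recip_status_def carrier_eq[OF n m]
  by (rule sum.cong) (use dist_val[OF n m _ v] in auto)

lemma rs0:
  assumes n: "n \<ge> 3" and m: "m = 2^(n-1)"
  shows "recip_status n 0 = 2 * real m - 1"
proof -
  have m4: "m \<ge> 4" using m_ge4[OF n m] .
  have "recip_status n 0 = (\<Sum>u \<in> {0..<2*m} - {0}. (1::real))"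
    unfolding rs_alt[OF n m, of 0, OF mult_pos_pos[OF zero_less_numeral order.strict_trans2[OF zero_less_numeral m4]]] using m4
    by (intro sum.cong) (auto simp: adj_iff[OF n m])
  also have "\<dots> = real (card ({0..<2*m} - {0}))" by simp
  also have "card ({0..<2*m} - {0}) = 2*m - 1" using m4 by simp
  finally show ?thesis using m4 by simp
qed

lemma rsP:
  assumes n: "n \<ge> 3" and m: "m = 2^(n-1)" and p: "0 < p" "p < m"
  shows "recip_status n p = real m - 1 + real m / 2"
proof -
  have m4: "m \<ge> 4" using m_ge4[OF n m] .
  have S: "{0..<2*m} - {p} = ({0..<m} - {p}) \<union> {m..<2*m}" using p by auto
  have "recip_status n p = (\<Sum>u \<in> {0..<m} - {p}. if pg_adj n u p then 1 else 1/2)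
        + (\<Sum>u \<in> {m..<2*m}. if pg_adj n u p then 1 else 1/2)"
    unfolding rs_alt[OF n m, of p, OF less_le_trans[OF p(2)], OF le_add2[of m m, unfolded mult_2[symmetric]]] S using p m4 by (subst sum.union_disjoint) auto
  also have "(\<Sum>u \<in> {0..<m} - {p}. if pg_adj n u p then 1 else 1/2) = (\<Sum>u \<in> {0..<m} - {p}. (1::real))"
    using p m4 by (intro sum.cong) (auto simp: adj_iff[OF n m])
  also have "(\<Sum>u \<in> {m..<2*m}. if pg_adj n u p then 1 else 1/2) = (\<Sum>u \<in> {m..<2*m}. (1/2::real))"
    using p m4 by (intro sum.cong) (auto simp: adj_iff[OF n m])
  finally show ?thesis using p m4 by simp
qed

lemma rsH:
  assumes n: "n \<ge> 3" and m: "m = 2^(n-1)" and h: "m \<le> h" "h < 2*m"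
  shows "recip_status n h = real m"
proof -
  have m4: "m \<ge> 4" using m_ge4[OF n m] .
  have S: "{0..<2*m} - {h} = {0} \<union> ({1..<m} \<union> ({m..<2*m} - {h}))" using h by auto
  have "recip_status n h = (\<Sum>u \<in> {0}. if pg_adj n u h then 1 else 1/2)
        + ((\<Sum>u \<in> {1..<m}. if pg_adj n u h then 1 else 1/2)
        + (\<Sum>u \<in> {m..<2*m} - {h}. if pg_adj n u h then 1 else 1/2))"
    unfolding rs_alt[OF n m h(2)] S using h m4
    by (subst sum.union_disjoint, simp, simp, force)+ simp
  also have "(\<Sum>u \<in> {0}. if pg_adj n u h then 1 else 1/2) = (1::real)"
    using h m4 by (simp add: adj_iff[OF n m])
  also have "(\<Sum>u \<in> {1..<m}. if pg_adj n u h then 1 else 1/2) = (\<Sum>u \<in> {1..<m}. (1/2::real))"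
    using h m4 by (intro sum.cong) (auto simp: adj_iff[OF n m])
  also have "(\<Sum>u \<in> {m..<2*m} - {h}. if pg_adj n u h then 1 else 1/2) = (\<Sum>u \<in> {m..<2*m} - {h}. (1/2::real))"
    using h m4 by (intro sum.cong) (auto simp: adj_iff[OF n m])
  finally show ?thesis using h m4 by (simp add: of_nat_diff field_simps)
qed


lemma card_pairs: "card {(p, q). 0 < p \<and> p < q \<and> q < (N::nat)} = (N - 1) choose 2"
proof (induction N)
  case 0 then show ?case by simp
next
  case (Suc N)
  have eq: "{(p, q). 0 < p \<and> p < q \<and> q < Suc N} =
     {(p, q). 0 < p \<and> p < q \<and> q < N} \<union> (\<lambda>p. (p, N)) ` {1..<N}" by auto
  have fin: "finite {(p, q). 0 < p \<and> p < q \<and> q < (N::nat)}"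
    by (rule finite_subset[of _ "{0..<N} \<times> {0..<N}"]) auto
  have "card {(p, q). 0 < p \<and> p < q \<and> q < Suc N} = ((N - 1) choose 2) + (N - 1)"
  proof -
    have d: "{(p, q). 0 < p \<and> p < q \<and> q < N} \<inter> (\<lambda>p. (p, N)) ` {1..<N} = {}" by auto
    have c: "card ((\<lambda>p. (p, N)) ` {1..<N}) = N - 1" by (subst card_image) (auto simp: inj_on_def)
    show ?thesis unfolding eq card_Un_disjoint[OF fin finite_imageI[OF finite_atLeastLessThan] d] c Suc.IH ..
  qed
  also have "\<dots> = N choose 2"
    by (cases N) (auto simp: numeral_2_eq_2)
  finally show ?case by simp
qed

theorem mainTheorem5:
  fixes n :: nat and x :: real
  assumes "n \<ge> 3" and "x > 0"
  shows "H_rs n x =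
      real (2^(n-1) - 1) * x powr ((2^(n+2) - 2^(n-1) - 4) / 2)
    + real (2^(n-1)) * x powr (2^n + 2^(n-1) - 1)
    + real ((2^(n-1) - 1) choose 2) * x powr (2^n + 2^(n-1) - 2)"
proof -
  note n = assms(1)
  define m :: nat where "m = 2^(n-1)"
  note m = m_def
  have m4: "m \<ge> 4" using m_ge4[OF n m] .
  define E1 where "E1 = (\<lambda>p. (0::nat, p)) ` {1..<m}"
  define E2 where "E2 = (\<lambda>p. (0::nat, p)) ` {m..<2*m}"
  define E3 where "E3 = {(p, q). 0 < p \<and> p < q \<and> q < m}"
  have ES: "{(u, v). pg_adj n u v \<and> u < v} = E1 \<union> (E2 \<union> E3)"
    unfolding E1_def E2_def E3_def adj_iff[OF n m] by auto
  have f3: "finite E3" unfolding E3_def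
    by (rule finite_subset[of _ "{0..<m} \<times> {0..<m}"]) auto
  have "H_rs n x = (\<Sum>(u, v) \<in> E1. x powr (recip_status n u + recip_status n v))
    + ((\<Sum>(u, v) \<in> E2. x powr (recip_status n u + recip_status n v))
    + (\<Sum>(u, v) \<in> E3. x powr (recip_status n u + recip_status n v)))"
    unfolding H_rs_def ES using f3
    by (subst sum.union_disjoint, simp add: E1_def, simp add: E2_def, force simp: E1_def E2_def E3_def)
       (subst sum.union_disjoint, simp add: E2_def, simp, force simp: E2_def E3_def, simp)
  also have "(\<Sum>(u, v) \<in> E1. x powr (recip_status n u + recip_status n v))
     = (\<Sum>(u, v) \<in> E1. x powr ((2 * real m - 1) + (real m - 1 + real m / 2)))"
    unfolding E1_def using rs0[OF n m] rsP[OF n m] by (intro sum.cong) auto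
  also have "\<dots> = real (m - 1) * x powr ((2 * real m - 1) + (real m - 1 + real m / 2))"
    unfolding E1_def by (simp add: card_image inj_on_def)
  also have "(\<Sum>(u, v) \<in> E2. x powr (recip_status n u + recip_status n v))
     = (\<Sum>(u, v) \<in> E2. x powr ((2 * real m - 1) + real m))"
    unfolding E2_def using rs0[OF n m] rsH[OF n m] by (intro sum.cong) auto
  also have "\<dots> = real m * x powr ((2 * real m - 1) + real m)"
    unfolding E2_def by (simp add: card_image inj_on_def)
  also have "(\<Sum>(u, v) \<in> E3. x powr (recip_status n u + recip_status n v))
     = (\<Sum>(u, v) \<in> E3. x powr ((real m - 1 + real m / 2) + (real m - 1 + real m / 2)))"
    unfolding E3_def using rsP[OF n m] by (intro sum.cong) auto
  also have "\<dots> = real ((m - 1) choose 2) * x powr ((real m - 1 + real m / 2) + (real m - 1 + real m / 2))"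
    using card_pairs[of m] unfolding E3_def by simp
  finally have H: "H_rs n x = real (m - 1) * x powr ((2 * real m - 1) + (real m - 1 + real m / 2))
     + (real m * x powr ((2 * real m - 1) + real m)
     + real ((m - 1) choose 2) * x powr ((real m - 1 + real m / 2) + (real m - 1 + real m / 2)))" .
  have r1: "(2::real)^(n-1) = real m" by (simp add: m)
  have r2: "(2::real)^n = 2 * real m" using n by (cases n) (auto simp: m)
  have r3: "(2::real)^(n+2) = 8 * real m" using n by (cases n) (auto simp: m power_add)
  have e1: "((2::real)^(n+2) - 2^(n-1) - 4) / 2 = (2 * real m - 1) + (real m - 1 + real m / 2)"
    unfolding r1 r3 by simp
  have e2: "(2::real)^n + 2^(n-1) - 1 = (2 * real m - 1) + real m"
    unfolding r1 r2 by simp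
  have e3: "(2::real)^n + 2^(n-1) - 2 = (real m - 1 + real m / 2) + (real m - 1 + real m / 2)"
    unfolding r1 r2 by simp
  show ?thesis unfolding e1 e2 e3 H m[symmetric] by simp
qed

end
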